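(* Let $f(p):=D(a_0,\ldots,a_n;p)$ be an optimal penalty function, i.e. one minimizing the sup-norm $\|D(a_0,\ldots,a_n;\cdot)\|_\infty$ over all choices $a_0,\ldots,a_n\in[0,1]$ (no ordering of the $a_i$ is assumed), and let $M(f):=\{x\in[0,1]: f(x)=\|f\|_\infty\}$ be its set of absolute maxima. Then: (i) $M(f)\cap\{a_0,\ldots,a_n\}=\emptyset$; (ii) $M(f)\cap[0,\min_i a_i)\neq\emptyset$ and $M(f)\cap(\max_i a_i,1]\neq\emptyset$; (iii) $a_0\le 1/2\le a_n$ and $M(f)\cap(a_0,a_n)\neq\emptyset$.
   Context: For an integer $n\ge1$ and $a_0,\ldots,a_n\in[0,1]$ (where $a_k$ is the estimate of the heads-probability $p$ of a biased coin when $k$ heads are observed in $n$ tosses), the penalty (risk) function is $D(a_0,\ldots,a_n;p)=\sum_{k=0}^n \binom{n}{k}p^k(1-p)^{n-k}|p-a_k|$ for $p\in[0,1]$. A choice $a_0,\ldots,a_n$ is called optimal if it minimizes $\|D(a_0,\ldots,a_n;\cdot)\|_\infty$ over $[0,1]$, and the corresponding $D$ is called an optimal penalty function. *)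

theory Defs
  imports Complex_Main
begin

definition penalty :: "nat \<Rightarrow> (nat \<Rightarrow> real) \<Rightarrow> real \<Rightarrow> real" where
  "penalty n a p = (\<Sum>k\<le>n. real (n choose k) * p ^ k * (1 - p) ^ (n - k) * \<bar>p - a k\<bar>)"

definition supnorm :: "nat \<Rightarrow> (nat \<Rightarrow> real) \<Rightarrow> real" where
  "supnorm n a = (SUP p\<in>{0..1}. \<bar>penalty n a p\<bar>)"

definition admissible :: "nat \<Rightarrow> (nat \<Rightarrow> real) \<Rightarrow> bool" where
  "admissible n a \<longleftrightarrow> (\<forall>k\<le>n. a k \<in> {0..1})"

definition optimal :: "nat \<Rightarrow> (nat \<Rightarrow> real) \<Rightarrow> bool" where
  "optimal n a \<longleftrightarrow> admissible n a \<and>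
     (\<forall>b. admissible n b \<longrightarrow> supnorm n a \<le> supnorm n b)"

definition maxset :: "nat \<Rightarrow> (nat \<Rightarrow> real) \<Rightarrow> real set" where
  "maxset n a = {x\<in>{0..1}. penalty n a x = supnorm n a}"

end

theory Submission
  imports Defs "HOL-Analysis.Analysis"
begin

lemma penalty_B: "penalty n a p = (\<Sum>k\<le>n. Bernstein n k p * \<bar>p - a k\<bar>)"
  unfolding penalty_def Bernstein_def by simp

lemma penalty_nonneg: "p \<in> {0..1} \<Longrightarrow> 0 \<le> penalty n a p"
  unfolding penalty_B by (auto intro!: sum_nonneg mult_nonneg_nonneg Bernstein_nonneg)

lemma penalty_cont: "continuous_on S (penalty n a)"
  unfolding penalty_def by (intro continuous_intros)

lemma supnorm_eq: "supnorm n a = (SUP p\<in>{0..1}. penalty n a p)"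
  unfolding supnorm_def by (intro SUP_cong refl) (simp add: penalty_nonneg)

lemma supnorm_attain:
  "\<exists>q\<in>{0..1::real}. supnorm n a = penalty n a q \<and> (\<forall>p\<in>{0..1}. penalty n a p \<le> penalty n a q)"
proof -
  obtain q where q: "q \<in> {0..1::real}" "\<forall>p\<in>{0..1}. penalty n a p \<le> penalty n a q"
    using continuous_attains_sup[of "{0..1::real}" "penalty n a"] penalty_cont by auto
  have "supnorm n a = penalty n a q"
    unfolding supnorm_eq using q by (intro cSup_eq_maximum) auto
  with q show ?thesis by auto
qed

lemma le_supnorm: "p \<in> {0..1} \<Longrightarrow> penalty n a p \<le> supnorm n a"
  using supnorm_attain[of n a] by auto

lemma Bern_0: "Bernstein n k 0 = (if k = 0 then 1 else 0)"
  by (simp add: Bernstein_def)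

lemma Bern_1: "k \<le> n \<Longrightarrow> Bernstein n k 1 = (if k = n then 1 else 0)"
  by (simp add: Bernstein_def)

lemma penalty_0: "penalty n a 0 = \<bar>a 0\<bar>"
proof -
  have "penalty n a 0 = (\<Sum>k\<le>n. (if k = 0 then \<bar>a k\<bar> else 0))"
    unfolding penalty_B by (intro sum.cong) (auto simp: Bern_0)
  then show ?thesis by simp
qed

lemma penalty_1: "penalty n a 1 = \<bar>1 - a n\<bar>"
proof -
  have "penalty n a 1 = (\<Sum>k\<le>n. (if k = n then \<bar>1 - a k\<bar> else 0))"
    unfolding penalty_B by (intro sum.cong) (auto simp: Bern_1)
  then show ?thesis by simp
qed

lemma supnorm_half: "supnorm n (\<lambda>k. 1/2) \<le> 1/2"
proof -
  obtain q where q: "q \<in> {0..1::real}" "supnorm n (\<lambda>k. 1/2) = penalty n (\<lambda>k. 1/2) q"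
    using supnorm_attain by blast
  have "penalty n (\<lambda>k. 1/2) q = (\<Sum>k\<le>n. Bernstein n k q) * \<bar>q - 1/2\<bar>"
    unfolding penalty_B by (simp add: sum_distrib_right[symmetric])
  also have "\<dots> \<le> 1/2" using q by (auto simp: abs_if)
  finally show ?thesis using q by simp
qed

lemma opt_le_half: "optimal n a \<Longrightarrow> supnorm n a \<le> 1/2"
proof -
  assume "optimal n a"
  moreover have "admissible n (\<lambda>k. 1/2)" by (simp add: admissible_def)
  ultimately have "supnorm n a \<le> supnorm n (\<lambda>k. 1/2)" unfolding optimal_def by blast
  then show ?thesis using supnorm_half[of n] by linarith
qed

lemma penalty_convex:
  assumes t: "0 \<le> t" "t \<le> 1" and p: "p \<in> {0..1}"
  shows "penalty n (\<lambda>k. (1-t) * a k + t * b k) p \<le> (1-t) * penalty n a p + t * penalty n b p"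
proof -
  have "penalty n (\<lambda>k. (1-t) * a k + t * b k) p
      \<le> (\<Sum>k\<le>n. Bernstein n k p * ((1-t) * \<bar>p - a k\<bar> + t * \<bar>p - b k\<bar>))"
    unfolding penalty_B
  proof (intro sum_mono mult_left_mono)
    fix k
    have "p - ((1-t) * a k + t * b k) = (1-t) * (p - a k) + t * (p - b k)" by algebra
    also have "\<bar>\<dots>\<bar> \<le> \<bar>(1-t) * (p - a k)\<bar> + \<bar>t * (p - b k)\<bar>" by (rule abs_triangle_ineq)
    also have "\<dots> = (1-t) * \<bar>p - a k\<bar> + t * \<bar>p - b k\<bar>" using t by (simp add: abs_mult)
    finally show "\<bar>p - ((1-t) * a k + t * b k)\<bar> \<le> (1-t) * \<bar>p - a k\<bar> + t * \<bar>p - b k\<bar>" .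
    show "0 \<le> Bernstein n k p" using p by (auto intro: Bernstein_nonneg)
  qed
  also have "\<dots> = (1-t) * penalty n a p + t * penalty n b p"
    unfolding penalty_B sum_distrib_left sum.distrib[symmetric] by (intro sum.cong) (auto simp: algebra_simps)
  finally show ?thesis .
qed

lemma improve:
  assumes opt: "optimal n a" and b: "admissible n b"
    and hb: "\<And>p. p \<in> maxset n a \<Longrightarrow> penalty n b p < supnorm n a"
  shows False
proof -
  define S where "S = supnorm n a"
  have aadm: "admissible n a" using opt unfolding optimal_def by blast
  have optle: "\<And>c. admissible n c \<Longrightarrow> S \<le> supnorm n c"
    using opt unfolding optimal_def S_def by blast
  define K where "K = {p\<in>{0..1::real}. S \<le> penalty n b p}"
  have Kc: "compact K"
  proof -
    have "closed {p. S \<le> penalty n b p}"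
      by (rule closed_Collect_le) (auto intro: continuous_on_const penalty_cont)
    then have "compact ({0..1} \<inter> {p. S \<le> penalty n b p})"
      by (intro compact_Int_closed) auto
    moreover have "K = {0..1} \<inter> {p. S \<le> penalty n b p}" unfolding K_def by auto
    ultimately show ?thesis by simp
  qed
  show False
  proof (cases "K = {}")
    case True
    obtain q where q: "q \<in> {0..1::real}" "supnorm n b = penalty n b q"
      using supnorm_attain by blast
    then have "penalty n b q < S" using True unfolding K_def by auto
    with q optle[OF b] show False by simp
  next
    case False
    obtain q where q: "q \<in> K" "\<forall>p\<in>K. penalty n a p \<le> penalty n a q"
      using continuous_attains_sup[OF Kc False penalty_cont] by blast
    have qS: "penalty n a q < S"
    proof -
      have "penalty n a q \<le> S" using q(1) le_supnorm unfolding K_def S_def by auto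
      moreover have "penalty n a q \<noteq> S"
      proof
        assume "penalty n a q = S"
        then have "q \<in> maxset n a" using q(1) unfolding maxset_def K_def S_def by auto
        then have "penalty n b q < S" using hb unfolding S_def by auto
        then show False using q(1) unfolding K_def by auto
      qed
      ultimately show ?thesis by simp
    qed
    define \<delta> where "\<delta> = S - penalty n a q"
    define G where "G = supnorm n b"
    have \<delta>: "\<delta> > 0" using qS unfolding \<delta>_def by simp
    have GS: "S \<le> G" using optle[OF b] unfolding G_def .
    define t where "t = \<delta> / (2 * (G - S + \<delta>))"
    have Gp: "G - S + \<delta> > 0" using \<delta> GS by linarith
    have tpos: "0 < t" using \<delta> Gp unfolding t_def by simp
    have teq: "t * (G - S + \<delta>) = \<delta> / 2" using Gp unfolding t_def by (simp add: field_simps)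
    have tkey: "t * (G - S + \<delta>) < \<delta>" using teq \<delta> by simp
    have "t * (G - S + \<delta>) \<ge> t * \<delta>" using tpos GS by (intro mult_left_mono) auto
    then have "t * \<delta> \<le> \<delta>" using tkey by linarith
    then have tle: "t \<le> 1" using \<delta> by (simp add: mult_le_cancel_right1)
    define c where "c = (\<lambda>k. (1-t) * a k + t * b k)"
    have cadm: "admissible n c"
      unfolding admissible_def c_def
    proof (intro allI impI)
      fix k assume k: "k \<le> n"
      have "a k \<in> {0..1}" "b k \<in> {0..1}" using aadm b k unfolding admissible_def by auto
      then have "(1 - t) * a k + t * b k \<le> 1"
        using tpos tle by (intro convex_bound_le) auto
      moreover have "0 \<le> (1 - t) * a k + t * b k"
        using tpos tle \<open>a k \<in> {0..1}\<close> \<open>b k \<in> {0..1}\<close> by (intro add_nonneg_nonneg mult_nonneg_nonneg) auto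
      ultimately show "(1 - t) * a k + t * b k \<in> {0..1}" by simp
    qed
    have less: "penalty n c p < S" if p: "p \<in> {0..1}" for p
    proof -
      have 1: "penalty n c p \<le> (1-t) * penalty n a p + t * penalty n b p"
        unfolding c_def using penalty_convex[OF _ tle p] tpos by simp
      have bG: "penalty n b p \<le> G" using le_supnorm[OF p] unfolding G_def .
      have aS: "penalty n a p \<le> S" using le_supnorm[OF p] unfolding S_def .
      show ?thesis
      proof (cases "p \<in> K")
        case True
        then have "penalty n a p \<le> S - \<delta>" using q unfolding \<delta>_def by auto
        then have "(1-t) * penalty n a p \<le> (1-t) * (S - \<delta>)" using tle by (intro mult_left_mono) auto
        moreover have "t * penalty n b p \<le> t * G" using bG tpos by (intro mult_left_mono) auto
        moreover have "(1-t)*(S-\<delta>) + t*G = S - \<delta> + t*(G - S + \<delta>)" by (simp add: algebra_simps)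
        ultimately show ?thesis using 1 tkey by linarith
      next
        case False
        then have "penalty n b p < S" using p unfolding K_def by auto
        then have "t * penalty n b p < t * S" using tpos by simp
        moreover have "(1-t) * penalty n a p \<le> (1-t) * S" using tle aS by (intro mult_left_mono) auto
        moreover have "(1-t)*S + t*S = S" by (simp add: algebra_simps)
        ultimately show ?thesis using 1 by linarith
      qed
    qed
    obtain q' where q': "q' \<in> {0..1::real}" "supnorm n c = penalty n c q'"
      using supnorm_attain by blast
    show False using less[OF q'(1)] q'(2) optle[OF cadm] by simp
  qed
qed

lemma abs_lin_near:
  fixes x y c :: real
  assumes "c \<noteq> x" "\<bar>y - x\<bar> < \<bar>x - c\<bar>"
  shows "\<bar>y - c\<bar> = (if c < x then 1 else -1) * (y - c)"
  using assms by (auto simp: abs_if split: if_splits)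

lemma kink:
  assumes j: "j \<le> n" and x0: "0 < a j" and x1: "a j < 1"
  shows "a j \<notin> maxset n a"
proof
  assume xM: "a j \<in> maxset n a"
  define x where "x = a j"
  have fx: "\<And>y. y \<in> {0..1} \<Longrightarrow> penalty n a y \<le> penalty n a x"
    using xM le_supnorm unfolding maxset_def x_def by auto
  define s where "s = (\<lambda>k. if a k < x then 1 else (-1::real))"
  define H where "H = (\<lambda>y. \<Sum>k\<le>n. if a k = x then 0 else Bernstein n k y * (s k * (y - a k)))"
  define W where "W = (\<lambda>y. \<Sum>k\<le>n. if a k = x then Bernstein n k y else 0)"
  define A where "A = insert x (insert (1 - x) ((\<lambda>k. \<bar>x - a k\<bar>) ` {k. k \<le> n \<and> a k \<noteq> x}))"
  define r where "r = Min A"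
  have finA: "finite A" unfolding A_def by auto
  have Apos: "\<forall>z\<in>A. 0 < z" unfolding A_def using x0 x1 x_def by auto
  have rpos: "0 < r" unfolding r_def using finA Apos by (subst Min_gr_iff) (auto simp: A_def)
  have rle: "z \<in> A \<Longrightarrow> r \<le> z" for z unfolding r_def using finA by auto
  have eq: "penalty n a y = H y + W y * \<bar>y - x\<bar>" if y: "\<bar>y - x\<bar> < r" for y
  proof -
    have "penalty n a y = (\<Sum>k\<le>n. (if a k = x then 0 else Bernstein n k y * (s k * (y - a k)))
                 + (if a k = x then Bernstein n k y else 0) * \<bar>y - x\<bar>)"
      unfolding penalty_B
    proof (intro sum.cong refl)
      fix k assume k: "k \<in> {..n}"
      show "Bernstein n k y * \<bar>y - a k\<bar> = (if a k = x then 0 else Bernstein n k y * (s k * (y - a k)))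
                 + (if a k = x then Bernstein n k y else 0) * \<bar>y - x\<bar>"
      proof (cases "a k = x")
        case False
        then have "\<bar>x - a k\<bar> \<in> A" using k unfolding A_def by auto
        then have "\<bar>y - x\<bar> < \<bar>x - a k\<bar>" using rle y by fastforce
        then have "\<bar>y - a k\<bar> = s k * (y - a k)"
          unfolding s_def using abs_lin_near[of "a k" x y] False by auto
        then show ?thesis using False by simp
      qed simp
    qed
    also have "\<dots> = H y + W y * \<bar>y - x\<bar>"
      unfolding H_def W_def by (simp add: sum.distrib sum_distrib_right)
    finally show ?thesis .
  qed
  have "H differentiable (at x)"
    unfolding H_def Bernstein_def
  proof (intro differentiable_sum ballI finite_atMost)
    fix k show "(\<lambda>y. if a k = x then 0 else real (n choose k) * y ^ k * (1 - y) ^ (n - k) * (s k * (y - a k))) differentiable at x"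
      by (cases "a k = x") (auto intro!: derivative_intros)
  qed
  then obtain D where HD: "(H has_real_derivative D) (at x)"
    using DERIV_deriv_iff_real_differentiable by blast
  define G where "G = (\<lambda>h. H (x + h) + H (x - h) - 2 * H x)"
  have GD: "(G has_real_derivative 0) (at 0)"
  proof -
    have 1: "(H has_real_derivative D) (at (x + 0))" using HD by simp
    have 2: "(H has_real_derivative D) (at (x - 0))" using HD by simp
    have "((\<lambda>h. H (x + h)) has_real_derivative D * 1) (at 0)"
      by (rule DERIV_chain2[of H D "\<lambda>h. x + h" 0, simplified, OF HD]) (auto intro!: derivative_eq_intros)
    moreover have "((\<lambda>h. H (x - h)) has_real_derivative D * (-1)) (at 0)"
      by (rule DERIV_chain2[of H D "\<lambda>h. x - h" 0, simplified, OF HD]) (auto intro!: derivative_eq_intros)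
    ultimately have "(G has_real_derivative D * 1 + D * (-1) - 0) (at 0)"
      unfolding G_def by (intro derivative_intros)
    then show ?thesis by simp
  qed
  have G0: "G 0 = 0" unfolding G_def by simp
  have lim1: "((\<lambda>h. G h / h) \<longlongrightarrow> 0) (at_right 0)"
    using GD G0 unfolding DERIV_def filterlim_at_split by simp
  have cW1: "isCont (\<lambda>h. W (x + h)) 0" unfolding W_def Bernstein_def
  proof (intro continuous_intros)
    fix k show "isCont (\<lambda>h. if a k = x then real (n choose k) * (x + h) ^ k * (1 - (x + h)) ^ (n - k) else 0) 0"
      by (cases "a k = x") (auto intro!: continuous_intros)
  qed
  have cW2: "isCont (\<lambda>h. W (x - h)) 0" unfolding W_def Bernstein_def
  proof (intro continuous_intros)
    fix k show "isCont (\<lambda>h. if a k = x then real (n choose k) * (x - h) ^ k * (1 - (x - h)) ^ (n - k) else 0) 0"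
      by (cases "a k = x") (auto intro!: continuous_intros)
  qed
  have lim2: "((\<lambda>h. W (x + h)) \<longlongrightarrow> W x) (at_right 0)"
    using cW1 unfolding isCont_def filterlim_at_split by simp
  have lim3: "((\<lambda>h. W (x - h)) \<longlongrightarrow> W x) (at_right 0)"
    using cW2 unfolding isCont_def filterlim_at_split by simp
  have lim: "((\<lambda>h. G h / h + W (x + h) + W (x - h)) \<longlongrightarrow> 0 + W x + W x) (at_right 0)"
    by (intro tendsto_add lim1 lim2 lim3)
  have ev: "eventually (\<lambda>h. G h / h + W (x + h) + W (x - h) \<le> 0) (at_right 0)"
    unfolding eventually_at_right_field
  proof (intro exI[of _ r] conjI allI impI rpos)
    fix h :: real assume h: "0 < h" "h < r"
    have rx: "r \<le> x" "r \<le> 1 - x" using rle unfolding A_def by auto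
    have "penalty n a (x + h) \<le> penalty n a x" using h rx by (intro fx) auto
    moreover have "penalty n a (x - h) \<le> penalty n a x" using h rx by (intro fx) auto
    moreover have "penalty n a (x + h) = H (x + h) + W (x + h) * h" using eq[of "x + h"] h by simp
    moreover have "penalty n a (x - h) = H (x - h) + W (x - h) * h" using eq[of "x - h"] h by simp
    moreover have "penalty n a x = H x" using eq[of x] rpos by simp
    ultimately have "G h + (W (x + h) + W (x - h)) * h \<le> 0" unfolding G_def by (simp add: algebra_simps)
    then have "(G h + (W (x + h) + W (x - h)) * h) / h \<le> 0" using h by (simp add: divide_nonpos_pos)
    then show "G h / h + W (x + h) + W (x - h) \<le> 0" using h by (simp add: add_divide_distrib)
  qed
  have "0 + W x + W x \<le> 0"
    by (rule tendsto_upperbound[OF lim ev]) simp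
  moreover have "W x \<ge> Bernstein n j x"
  proof -
    have "(if a j = x then Bernstein n j x else 0) \<le> W x" unfolding W_def
      using j x0 x1 by (intro member_le_sum) (auto intro!: Bernstein_nonneg simp: x_def)
    then show ?thesis by (simp add: x_def)
  qed
  moreover have "Bernstein n j x > 0" using x0 x1 j by (intro Bernstein_pos) (auto simp: x_def)
  ultimately show False by simp
qed

lemma supnorm_pos: "0 < supnorm n a"
proof (rule ccontr)
  assume "\<not> 0 < supnorm n a"
  then have le: "\<And>p. p \<in> {0..1} \<Longrightarrow> penalty n a p \<le> 0" using le_supnorm by (meson order_trans not_less)
  have "a 0 = 0" using le[of 0] penalty_0[of n a] by simp
  moreover have "a n = 1" using le[of 1] penalty_1[of n a] by simp
  moreover have "Bernstein n 0 (1/2) * \<bar>1/2 - a 0\<bar> \<le> penalty n a (1/2)"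
    unfolding penalty_B by (rule member_le_sum) (auto intro!: mult_nonneg_nonneg Bernstein_nonneg)
  moreover have "Bernstein n 0 (1/2) > 0" by (intro Bernstein_pos) auto
  ultimately have "0 < penalty n a (1/2)"
    by (smt (verit, best) half_gt_zero mult_pos_pos)
  then show False using le[of "1/2"] by simp
qed

lemma maxset_compact: "compact (maxset n a)"
proof -
  have "closed {p. penalty n a p = supnorm n a}"
    by (rule closed_Collect_eq) (auto intro: continuous_on_const penalty_cont)
  then have "compact ({0..1} \<inter> {p. penalty n a p = supnorm n a})"
    by (intro compact_Int_closed) auto
  moreover have "maxset n a = {0..1} \<inter> {p. penalty n a p = supnorm n a}" unfolding maxset_def by auto
  ultimately show ?thesis by simp
qed

lemma gap:
  assumes "c \<notin> maxset n a"
  shows "\<exists>g>0. \<forall>p\<in>maxset n a. g \<le> \<bar>p - c\<bar>"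
proof (cases "maxset n a = {}")
  case True then show ?thesis by (intro exI[of _ 1]) auto
next
  case False
  have "continuous_on (maxset n a) (\<lambda>p. \<bar>p - c\<bar>)" by (intro continuous_intros)
  then obtain q where q: "q \<in> maxset n a" "\<forall>p\<in>maxset n a. \<bar>q - c\<bar> \<le> \<bar>p - c\<bar>"
    using continuous_attains_inf[OF maxset_compact False] by blast
  then have "q \<noteq> c" using assms by auto
  then show ?thesis using q by (intro exI[of _ "\<bar>q - c\<bar>"]) auto
qed

lemma maxset_iff: "p \<in> maxset n a \<longleftrightarrow> p \<in> {0..1} \<and> penalty n a p = supnorm n a"
  unfolding maxset_def by auto

lemma penalty_update:
  assumes "k \<le> n"
  shows "penalty n (a(k := v)) p = penalty n a p + Bernstein n k p * (\<bar>p - v\<bar> - \<bar>p - a k\<bar>)"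
proof -
  have "penalty n (a(k := v)) p = (\<Sum>i\<le>n. Bernstein n i p * \<bar>p - a i\<bar>
      + (if i = k then Bernstein n k p * (\<bar>p - v\<bar> - \<bar>p - a k\<bar>) else 0))"
    unfolding penalty_B by (intro sum.cong) (auto simp: algebra_simps)
  also have "\<dots> = penalty n a p + Bernstein n k p * (\<bar>p - v\<bar> - \<bar>p - a k\<bar>)"
    unfolding penalty_B sum.distrib using assms by simp
  finally show ?thesis .
qed

lemma Bern_lower:
  assumes "k \<le> n" "0 \<le> p" "p \<le> 1"
  shows "p ^ n * (1 - p) ^ n \<le> Bernstein n k p"
proof -
  have "p ^ n \<le> p ^ k" using assms by (intro power_decreasing) auto
  moreover have "(1 - p) ^ n \<le> (1 - p) ^ (n - k)" using assms by (intro power_decreasing) auto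
  ultimately have "p ^ n * (1 - p) ^ n \<le> p ^ k * (1 - p) ^ (n - k)"
    using assms by (intro mult_mono) auto
  also have "\<dots> \<le> real (n choose k) * (p ^ k * (1 - p) ^ (n - k))"
  proof -
    have "1 \<le> real (n choose k)" using assms by (simp add: Suc_leI)
    moreover have "0 \<le> p ^ k * (1 - p) ^ (n - k)" using assms by simp
    ultimately show ?thesis using mult_right_mono[of 1 "real (n choose k)" "p ^ k * (1 - p) ^ (n - k)"] by simp
  qed
  finally show ?thesis unfolding Bernstein_def by (simp add: mult.assoc)
qed

lemma Bern_0n: "Bernstein n 0 p = (1 - p) ^ n" by (simp add: Bernstein_def)
lemma Bern_nn: "Bernstein n n p = p ^ n" by (simp add: Bernstein_def)

lemma Bern_small:
  assumes "1 \<le> k" "0 \<le> p" "p \<le> 1"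
  shows "Bernstein n k p \<le> 2 ^ n * p"
proof -
  have "p ^ k \<le> p" using assms by (metis power_decreasing power_one_right)
  moreover have "(1 - p) ^ (n - k) \<le> 1" using assms by (intro power_le_one) auto
  ultimately have "p ^ k * (1 - p) ^ (n - k) \<le> p * 1" using assms
    by (intro mult_mono) auto
  moreover have "real (n choose k) \<le> 2 ^ n" using binomial_le_pow2[of n k]
    by (metis of_nat_le_iff of_nat_numeral of_nat_power)
  ultimately have "real (n choose k) * (p ^ k * (1 - p) ^ (n - k)) \<le> 2 ^ n * p"
    using assms by (intro mult_mono) auto
  then show ?thesis unfolding Bernstein_def by (simp add: mult.assoc)
qed

lemma abs_lip: "\<bar>p - v\<bar> - \<bar>p - u\<bar> \<le> \<bar>v - u\<bar>" for p u v :: real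
  by linarith

lemma adm_upd: "admissible n a \<Longrightarrow> v \<in> {0..1} \<Longrightarrow> admissible n (a(k := v))"
  unfolding admissible_def by auto

lemma opt_adm: "optimal n a \<Longrightarrow> admissible n a" unfolding optimal_def by blast

lemma a0_le_half: "optimal n a \<Longrightarrow> a 0 \<le> 1/2"
  using opt_le_half[of n a] le_supnorm[of 0 n a] penalty_0[of n a] by auto

lemma an_ge_half: "optimal n a \<Longrightarrow> 1/2 \<le> a n"
  using opt_le_half[of n a] le_supnorm[of 1 n a] penalty_1[of n a] by auto

lemma a0_notin:
  assumes opt: "optimal n a"
  shows "a 0 \<notin> maxset n a"
proof
  assume M: "a 0 \<in> maxset n a"
  have "a 0 \<in> {0..1}" using opt_adm[OF opt] unfolding admissible_def by auto
  moreover have "a 0 \<le> 1/2" using a0_le_half[OF opt] .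
  ultimately consider "0 < a 0 \<and> a 0 < 1" | "a 0 = 0" by fastforce
  then show False
  proof cases
    case 1 then show False using kink[of 0 n a] M by auto
  next
    case 2
    then have "penalty n a 0 = supnorm n a" using M unfolding maxset_def by auto
    then show False using penalty_0[of n a] 2 supnorm_pos[of n a] by simp
  qed
qed

lemma an_notin:
  assumes opt: "optimal n a"
  shows "a n \<notin> maxset n a"
proof
  assume M: "a n \<in> maxset n a"
  have "a n \<in> {0..1}" using opt_adm[OF opt] unfolding admissible_def by auto
  moreover have "1/2 \<le> a n" using an_ge_half[OF opt] .
  ultimately consider "0 < a n \<and> a n < 1" | "a n = 1" by fastforce
  then show False
  proof cases
    case 1 then show False using kink[of n n a] M by auto
  next
    case 2
    then have "penalty n a 1 = supnorm n a" using M unfolding maxset_def by auto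
    then show False using penalty_1[of n a] 2 supnorm_pos[of n a] by simp
  qed
qed

lemma partC:
  assumes opt: "optimal n a" and n1: "1 \<le> n"
    and empty: "maxset n a \<inter> {a 0<..<a n} = {}"
  shows False
proof -
  have adm: "admissible n a" using opt_adm[OF opt] .
  have h0: "a 0 \<le> 1/2" and hn: "1/2 \<le> a n" using a0_le_half[OF opt] an_ge_half[OF opt] by auto
  have a01: "0 \<le> a 0" "a n \<le> 1" using adm n1 unfolding admissible_def by auto
  obtain g0 where g0: "g0 > 0" "\<forall>p\<in>maxset n a. g0 \<le> \<bar>p - a 0\<bar>" using gap[OF a0_notin[OF opt]] by blast
  obtain gn where gn: "gn > 0" "\<forall>p\<in>maxset n a. gn \<le> \<bar>p - a n\<bar>" using gap[OF an_notin[OF opt]] by blast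
  define t where "t = min (min g0 gn) (min (if 0 < a 0 then a 0 else 1) (if a n < 1 then 1 - a n else 1))"
  have tpos: "0 < t" unfolding t_def using g0 gn by auto
  have tg: "t \<le> g0" "t \<le> gn" unfolding t_def by auto
  define u0 where "u0 = (if 0 < a 0 then t else 0)"
  define un where "un = (if a n < 1 then t else 0)"
  have u0: "0 \<le> u0" "u0 \<le> a 0" unfolding u0_def t_def using tpos g0 gn a01 by auto
  have un: "0 \<le> un" "un \<le> 1 - a n" unfolding un_def t_def using tpos g0 gn a01 by auto
  have n0: "n \<noteq> 0" using n1 by simp
  define b where "b = (a(0 := a 0 - u0))(n := a n + un)"
  have badm: "admissible n b" unfolding b_def
    using u0 un a01 h0 hn adm by (intro adm_upd) auto
  have pen: "penalty n b p = penalty n a p + Bernstein n 0 p * (\<bar>p - (a 0 - u0)\<bar> - \<bar>p - a 0\<bar>)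
        + Bernstein n n p * (\<bar>p - (a n + un)\<bar> - \<bar>p - a n\<bar>)" for p
    unfolding b_def using n0 by (simp add: penalty_update)
  show False
  proof (rule improve[OF opt badm])
    fix p assume pM: "p \<in> maxset n a"
    then have p01: "0 \<le> p" "p \<le> 1" and pS: "penalty n a p = supnorm n a" unfolding maxset_def by auto
    have d0: "t \<le> \<bar>p - a 0\<bar>" and dn: "t \<le> \<bar>p - a n\<bar>" using g0 gn tg pM by force+
    have "p \<notin> {a 0<..<a n}" using pM empty by blast
    then consider "p \<le> a 0 - t" | "p \<ge> a n + t" using d0 dn h0 hn by fastforce
    then show "penalty n b p < supnorm n a"
    proof cases
      case 1
      then have "0 < a 0" using tpos p01 by linarith
      then have u0t: "u0 = t" unfolding u0_def by simp
      have c0: "\<bar>p - (a 0 - u0)\<bar> - \<bar>p - a 0\<bar> = - t" using 1 u0t tpos by (simp add: abs_if)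
      have cn: "\<bar>p - (a n + un)\<bar> - \<bar>p - a n\<bar> \<le> t" using abs_lip[of p "a n + un" "a n"] un
        using tpos unfolding un_def by (auto split: if_splits)
      have plt: "p < 1 - p" using 1 h0 tpos by linarith
      have "p ^ n < (1 - p) ^ n" using plt p01 n0 by (intro power_strict_mono) auto
      then have lt: "Bernstein n n p < Bernstein n 0 p" by (simp add: Bern_0n Bern_nn)
      have mb: "Bernstein n n p * (\<bar>p - (a n + un)\<bar> - \<bar>p - a n\<bar>) \<le> Bernstein n n p * t"
        using cn p01 by (intro mult_left_mono Bernstein_nonneg) auto
      have "Bernstein n 0 p * (\<bar>p - (a 0 - u0)\<bar> - \<bar>p - a 0\<bar>)
        + Bernstein n n p * (\<bar>p - (a n + un)\<bar> - \<bar>p - a n\<bar>) < 0"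
      proof -
        have "Bernstein n n p * t < Bernstein n 0 p * t" using lt tpos by simp
        then show ?thesis using mb c0 by simp
      qed
      then show ?thesis using pen[of p] pS by linarith
    next
      case 2
      then have "a n < 1" using tpos p01 by linarith
      then have unt: "un = t" unfolding un_def by simp
      have cn: "\<bar>p - (a n + un)\<bar> - \<bar>p - a n\<bar> = - t" using 2 unt tpos by (simp add: abs_if)
      have c0: "\<bar>p - (a 0 - u0)\<bar> - \<bar>p - a 0\<bar> \<le> t" using abs_lip[of p "a 0 - u0" "a 0"] u0
        using tpos unfolding u0_def by (auto split: if_splits)
      have plt: "1 - p < p" using 2 hn tpos by linarith
      have "(1 - p) ^ n < p ^ n" using plt p01 n0 by (intro power_strict_mono) auto
      then have lt: "Bernstein n 0 p < Bernstein n n p" by (simp add: Bern_0n Bern_nn)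
      have mb: "Bernstein n 0 p * (\<bar>p - (a 0 - u0)\<bar> - \<bar>p - a 0\<bar>) \<le> Bernstein n 0 p * t"
        using c0 p01 by (intro mult_left_mono Bernstein_nonneg) auto
      have "Bernstein n 0 p * (\<bar>p - (a 0 - u0)\<bar> - \<bar>p - a 0\<bar>)
        + Bernstein n n p * (\<bar>p - (a n + un)\<bar> - \<bar>p - a n\<bar>) < 0"
      proof -
        have "Bernstein n 0 p * t < Bernstein n n p * t" using lt tpos by simp
        then show ?thesis using mb cn by simp
      qed
      then show ?thesis using pen[of p] pS by linarith
    qed
  qed
qed

lemma caseA:
  assumes opt: "optimal n a" and n1: "1 \<le> n" and j: "j \<le> n"
    and minj: "\<forall>k\<le>n. a j \<le> a k" and notin: "a j \<notin> maxset n a"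
    and above: "\<forall>p\<in>maxset n a. a j \<le> p"
  shows False
proof -
  define m where "m = a j"
  have adm: "admissible n a" using opt_adm[OF opt] .
  have m0: "0 \<le> m" using adm j unfolding admissible_def m_def by auto
  have mh: "m \<le> 1/2" using minj a0_le_half[OF opt] unfolding m_def by force
  have hn: "1/2 \<le> a n" using an_ge_half[OF opt] .
  have an1: "a n \<le> 1" using adm unfolding admissible_def by auto
  have S0: "0 < supnorm n a" by (rule supnorm_pos)
  obtain g where g: "g > 0" "\<forall>p\<in>maxset n a. g \<le> \<bar>p - m\<bar>" using gap[OF notin] unfolding m_def by blast
  have pbig: "p \<ge> m + s" if "p \<in> maxset n a" "s \<le> g" for p s
    using g above that unfolding m_def by force
  show False
  proof (cases "j = n")
    case True
    define t where "t = min g (1/2)"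
    have tpos: "0 < t" and tg: "t \<le> g" using g unfolding t_def by auto
    define b where "b = a(n := m + t)"
    have badm: "admissible n b" unfolding b_def using adm m0 mh tpos unfolding t_def
      by (intro adm_upd) auto
    show False
    proof (rule improve[OF opt badm])
      fix p assume pM: "p \<in> maxset n a"
      then have p01: "0 \<le> p" "p \<le> 1" and pS: "penalty n a p = supnorm n a" unfolding maxset_def by auto
      have pm: "p \<ge> m + t" using pbig[OF pM tg] .
      have "penalty n b p = penalty n a p + Bernstein n n p * (\<bar>p - (m + t)\<bar> - \<bar>p - a n\<bar>)"
        unfolding b_def by (simp add: penalty_update)
      also have "\<bar>p - (m + t)\<bar> - \<bar>p - a n\<bar> = - t" using pm tpos True unfolding m_def by simp
      also have "Bernstein n n p > 0" using pm tpos m0 by (simp add: Bern_nn)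
      then have "Bernstein n n p * (- t) < 0" using tpos by (simp add: mult_pos_neg)
      finally show "penalty n b p < supnorm n a" using pS by simp
    qed
  next
    case False
    define e where "e = (a n < 1)"
    obtain gn where gn: "gn > 0" "\<forall>p\<in>maxset n a. gn \<le> \<bar>p - a n\<bar>" using gap[OF an_notin[OF opt]] by blast
    define \<epsilon> where "\<epsilon> = (if e then (1 - a n) ^ n / 2 else 0)"
    define t where "t = min (min g (1/2)) (if e then min gn (1 - a n) else 1)"
    have tpos: "0 < t" and tg: "t \<le> g" "t \<le> 1/2" using g gn unfolding t_def e_def by auto
    have eps0: "0 \<le> \<epsilon>" "\<epsilon> \<le> 1/2" unfolding \<epsilon>_def e_def using hn an1
      by (auto simp: power_le_one)
    have te: "e \<Longrightarrow> t \<le> gn \<and> t \<le> 1 - a n" unfolding t_def by auto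
    have teps: "t * \<epsilon> \<le> t" using tpos eps0 by (simp add: mult_le_cancel_left1)
    define b where "b = (a(j := m + t))(n := a n + t * \<epsilon>)"
    have bn: "a n + t * \<epsilon> \<in> {0..1}"
    proof (cases e)
      case True
      then have "t * \<epsilon> \<le> 1 - a n" using teps te by linarith
      moreover have "0 \<le> t * \<epsilon>" using tpos eps0 by simp
      ultimately show ?thesis using hn by simp
    next
      case False then show ?thesis using hn an1 unfolding \<epsilon>_def by auto
    qed
    have badm: "admissible n b" unfolding b_def using adm m0 mh tg tpos bn
      by (intro adm_upd) auto
    have pen: "penalty n b p = penalty n a p + Bernstein n j p * (\<bar>p - (m + t)\<bar> - \<bar>p - m\<bar>)
        + Bernstein n n p * (\<bar>p - (a n + t * \<epsilon>)\<bar> - \<bar>p - a n\<bar>)" for p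
      unfolding b_def using False j by (simp add: penalty_update m_def)
    show False
    proof (rule improve[OF opt badm])
      fix p assume pM: "p \<in> maxset n a"
      then have p01: "0 \<le> p" "p \<le> 1" and pS: "penalty n a p = supnorm n a" unfolding maxset_def by auto
      have pm: "p \<ge> m + t" using pbig[OF pM tg(1)] .
      have cj: "\<bar>p - (m + t)\<bar> - \<bar>p - m\<bar> = - t" using pm tpos by simp
      show "penalty n b p < supnorm n a"
      proof (cases "p = 1")
        case True
        have "e"
        proof (rule ccontr)
          assume "\<not> e"
          then have "a n = 1" using an1 unfolding e_def by auto
          then show False using pS True penalty_1[of n a] S0 by simp
        qed
        then have epos: "0 < \<epsilon>" unfolding \<epsilon>_def e_def by simp
        have "\<bar>1 - (a n + t * \<epsilon>)\<bar> - \<bar>1 - a n\<bar> = - (t * \<epsilon>)" using bn an1 by auto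
        moreover have "0 < t * \<epsilon>" using tpos epos by simp
        ultimately show ?thesis using pen[of p] pS True j False by (simp add: Bern_1)
      next
        case p1: False
        have pp: "0 < p" "p < 1" using pm m0 tpos p01 p1 by auto
        have Bjpos: "0 < Bernstein n j p" using pp j by (intro Bernstein_pos) auto
        have key: "Bernstein n n p * (\<bar>p - (a n + t * \<epsilon>)\<bar> - \<bar>p - a n\<bar>) \<le> t * Bernstein n j p / 2"
        proof (cases "e")
          case False
          then have "\<epsilon> = 0" unfolding \<epsilon>_def by simp
          then show ?thesis using Bjpos tpos by simp
        next
          case True
          have "t \<le> \<bar>p - a n\<bar>" using gn te[OF True] pM by force
          then consider "p \<ge> a n + t" | "p \<le> a n - t" by linarith
          then show ?thesis
          proof cases
            case 1
            then have "\<bar>p - (a n + t * \<epsilon>)\<bar> - \<bar>p - a n\<bar> = - (t * \<epsilon>)"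
            proof -
              have "p \<ge> a n + t * \<epsilon>" using 1 teps by linarith
              moreover have "0 \<le> t * \<epsilon>" using tpos eps0 by simp
              ultimately show ?thesis
                using abs_of_nonneg[of "p - a n"] abs_of_nonneg[of "p - (a n + t * \<epsilon>)"] by linarith
            qed
            moreover have "0 \<le> Bernstein n n p * (t * \<epsilon>)" using p01 tpos eps0
              by (intro mult_nonneg_nonneg Bernstein_nonneg) auto
            moreover have "0 < t * Bernstein n j p" using Bjpos tpos by simp
            ultimately show ?thesis by simp
          next
            case 2
            have c: "\<bar>p - (a n + t * \<epsilon>)\<bar> - \<bar>p - a n\<bar> \<le> t * \<epsilon>"
              using abs_lip[of p "a n + t * \<epsilon>" "a n"] tpos eps0 by simp
            have "(1 - a n) ^ n \<le> (1 - p) ^ n" using 2 tpos an1 by (intro power_mono) auto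
            then have "p ^ n * (1 - a n) ^ n \<le> p ^ n * (1 - p) ^ n" using pp by (intro mult_left_mono) auto
            also have "\<dots> \<le> Bernstein n j p" using Bern_lower[OF j] pp by auto
            finally have "Bernstein n n p * (2 * \<epsilon>) \<le> Bernstein n j p"
              using True unfolding \<epsilon>_def by (simp add: Bern_nn)
            then have "(t/2) * (Bernstein n n p * (2 * \<epsilon>)) \<le> (t/2) * Bernstein n j p"
              using tpos by (intro mult_left_mono) auto
            moreover have "Bernstein n n p * (t * \<epsilon>) = (t/2) * (Bernstein n n p * (2 * \<epsilon>))" by simp
            ultimately have "Bernstein n n p * (t * \<epsilon>) \<le> t * Bernstein n j p / 2" by (simp add: mult_ac)
            moreover have "Bernstein n n p * (\<bar>p - (a n + t * \<epsilon>)\<bar> - \<bar>p - a n\<bar>) \<le> Bernstein n n p * (t * \<epsilon>)"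
              using c p01 by (intro mult_left_mono Bernstein_nonneg) auto
            ultimately show ?thesis by linarith
          qed
        qed
        have "Bernstein n j p * (\<bar>p - (m + t)\<bar> - \<bar>p - m\<bar>) = - (t * Bernstein n j p)" using cj by simp
        moreover have "0 < t * Bernstein n j p" using tpos Bjpos by simp
        ultimately show ?thesis using pen[of p] pS key by linarith
      qed
    qed
  qed
qed

lemma caseB:
  assumes opt: "optimal n a" and n1: "1 \<le> n" and j: "j \<le> n" "j \<noteq> 0" "j \<noteq> n"
    and aj: "a j = 0" and zM: "0 \<in> maxset n a"
  shows False
proof -
  have adm: "admissible n a" using opt_adm[OF opt] .
  have h0: "a 0 \<le> 1/2" and hn: "1/2 \<le> a n" using a0_le_half[OF opt] an_ge_half[OF opt] by auto
  have an1: "a n \<le> 1" and a00: "0 \<le> a 0" using adm n1 unfolding admissible_def by auto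
  have S0: "0 < supnorm n a" by (rule supnorm_pos)
  have a0S: "a 0 = supnorm n a" using zM penalty_0[of n a] a00 unfolding maxset_def by auto
  have a0pos: "0 < a 0" using a0S S0 by simp
  define e where "e = (a n < 1)"
  obtain g0 where g0: "g0 > 0" "\<forall>p\<in>maxset n a. g0 \<le> \<bar>p - a 0\<bar>" using gap[OF a0_notin[OF opt]] by blast
  obtain gn where gn: "gn > 0" "\<forall>p\<in>maxset n a. gn \<le> \<bar>p - a n\<bar>" using gap[OF an_notin[OF opt]] by blast
  define \<epsilon> :: real where "\<epsilon> = (if e then 1/2 else 0)"
  define d1 where "d1 = 1 / a 0 ^ n"
  define d2 where "d2 = \<epsilon> / (1 - a n) ^ n"
  define \<delta> where "\<delta> = d1 + d2 + 1"
  define K where "K = real n + \<delta> * 2 ^ n + 1"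
  have d1pos: "0 < d1" unfolding d1_def using a0pos by simp
  have d2pos: "0 \<le> d2" unfolding d2_def \<epsilon>_def using an1 by auto
  have \<delta>pos: "1 \<le> \<delta>" unfolding \<delta>_def using d1pos d2pos by simp
  have Kpos: "1 \<le> K" unfolding K_def using \<delta>pos by simp
  have eps0: "0 \<le> \<epsilon>" "\<epsilon> \<le> 1/2" unfolding \<epsilon>_def by auto
  define t where "t = min (min (min g0 (a 0 / \<delta>)) (1 / (2 * \<delta> * K))) (if e then min gn (1 - a n) else 1)"
  have tpos: "0 < t" using g0 gn a0pos \<delta>pos Kpos unfolding t_def e_def by auto
  have tg0: "t \<le> g0" unfolding t_def by auto
  have tdel: "t * \<delta> \<le> a 0"
  proof -
    have "t \<le> a 0 / \<delta>" unfolding t_def by auto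
    then show ?thesis using \<delta>pos by (simp add: le_divide_eq)
  qed
  have tK: "t * \<delta> * K \<le> 1/2"
  proof -
    have "t \<le> 1 / (2 * \<delta> * K)" unfolding t_def by auto
    then have "t * (2 * \<delta> * K) \<le> 1" using \<delta>pos Kpos by (simp add: le_divide_eq)
    then show ?thesis by (simp add: mult_ac)
  qed
  have te: "e \<Longrightarrow> t \<le> gn \<and> t \<le> 1 - a n" unfolding t_def by auto
  have teps: "t * \<epsilon> \<le> t" using tpos eps0 by (simp add: mult_le_cancel_left1)
  have "t \<le> t * \<delta>" using tpos \<delta>pos by (simp add: mult_le_cancel_left1)
  then have tle0: "t \<le> a 0" using tdel by linarith
  have bn: "a n + t * \<epsilon> \<in> {0..1}"
  proof (cases e)
    case True
    then have "t * \<epsilon> \<le> 1 - a n" using teps te by linarith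
    moreover have "0 \<le> t * \<epsilon>" using tpos eps0 by simp
    ultimately show ?thesis using hn by simp
  next
    case False then show ?thesis using hn an1 unfolding \<epsilon>_def by auto
  qed
  define b where "b = ((a(0 := a 0 - t))(j := t * \<delta>))(n := a n + t * \<epsilon>)"
  have badm: "admissible n b" unfolding b_def using adm tpos tle0 tdel h0 bn \<delta>pos
    by (intro adm_upd) auto
  have pen: "penalty n b p = penalty n a p + Bernstein n 0 p * (\<bar>p - (a 0 - t)\<bar> - \<bar>p - a 0\<bar>)
        + Bernstein n j p * (\<bar>p - t * \<delta>\<bar> - \<bar>p\<bar>)
        + Bernstein n n p * (\<bar>p - (a n + t * \<epsilon>)\<bar> - \<bar>p - a n\<bar>)" for p
    unfolding b_def using j n1 aj by (simp add: penalty_update)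
  show False
  proof (rule improve[OF opt badm])
    fix p assume pM: "p \<in> maxset n a"
    then have p01: "0 \<le> p" "p \<le> 1" and pS: "penalty n a p = supnorm n a" unfolding maxset_def by auto
    have B0n: "0 \<le> Bernstein n 0 p" "0 \<le> Bernstein n j p" "0 \<le> Bernstein n n p"
      using p01 by (auto intro: Bernstein_nonneg)
    have "t \<le> \<bar>p - a 0\<bar>" using g0 tg0 pM by force
    then consider "p \<le> a 0 - t" | "p \<ge> a 0 + t" by linarith
    then show "penalty n b p < supnorm n a"
    proof cases
      case 1
      have c0: "\<bar>p - (a 0 - t)\<bar> - \<bar>p - a 0\<bar> = - t" using 1 tpos by simp
      have cn: "Bernstein n n p * (\<bar>p - (a n + t * \<epsilon>)\<bar> - \<bar>p - a n\<bar>) \<le> Bernstein n n p * (t * \<epsilon>)"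
        using abs_lip[of p "a n + t * \<epsilon>" "a n"] tpos eps0 B0n by (intro mult_left_mono) auto
      have cnt: "Bernstein n n p * (t * \<epsilon>) \<le> t * Bernstein n n p"
        using teps B0n by (metis mult.commute mult_left_mono)
      have plt: "p < 1 - p" using 1 h0 tpos by linarith
      show ?thesis
      proof (cases "p \<ge> t * \<delta>")
        case True
        have cj: "\<bar>p - t * \<delta>\<bar> - \<bar>p\<bar> = - (t * \<delta>)" using True p01 by simp
        have "p ^ n < (1 - p) ^ n" using plt p01 n1 by (intro power_strict_mono) auto
        then have lt: "Bernstein n n p < Bernstein n 0 p" by (simp add: Bern_0n Bern_nn)
        have "t * Bernstein n n p < t * Bernstein n 0 p" using lt tpos by simp
        moreover have "0 \<le> Bernstein n j p * (t * \<delta>)" using B0n tpos \<delta>pos by simp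
        moreover have "Bernstein n 0 p * (\<bar>p - (a 0 - t)\<bar> - \<bar>p - a 0\<bar>) = - (t * Bernstein n 0 p)"
          using c0 by simp
        moreover have "Bernstein n j p * (\<bar>p - t * \<delta>\<bar> - \<bar>p\<bar>) = - (Bernstein n j p * (t * \<delta>))"
          using cj by simp
        ultimately show ?thesis using pen[of p] pS cn cnt by linarith
      next
        case False
        have cj: "Bernstein n j p * (\<bar>p - t * \<delta>\<bar> - \<bar>p\<bar>) \<le> Bernstein n j p * (t * \<delta>)"
          using abs_lip[of p "t * \<delta>" 0] tpos \<delta>pos B0n by (intro mult_left_mono) auto
        have pK: "p * K < 1/2"
        proof -
          have "p * K < t * \<delta> * K" using False Kpos by (intro mult_strict_right_mono) auto
          then show ?thesis using tK by linarith
        qed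
        have bern: "1 - real n * p \<le> Bernstein n 0 p"
          using Bernoulli_inequality[of "- p" n] p01 by (simp add: Bern_0n)
        have j1: "1 \<le> j" using j by simp
        have bj: "Bernstein n j p \<le> 2 ^ n * p" using Bern_small[OF j1 p01] .
        have "p ^ n \<le> p ^ 1" using p01 n1 by (intro power_decreasing) auto
        then have bnn: "Bernstein n n p \<le> p" by (simp add: Bern_nn)
        have "Bernstein n j p * \<delta> \<le> 2 ^ n * p * \<delta>"
          using bj \<delta>pos by (intro mult_right_mono) auto
        moreover have "p * K = real n * p + 2 ^ n * p * \<delta> + p" unfolding K_def by (simp add: algebra_simps)
        ultimately have "Bernstein n j p * \<delta> + Bernstein n n p < Bernstein n 0 p"
          using pK bern bnn by linarith
        then have "t * (Bernstein n j p * \<delta> + Bernstein n n p) < t * Bernstein n 0 p"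
          using tpos by simp
        moreover have "t * (Bernstein n j p * \<delta> + Bernstein n n p) = Bernstein n j p * (t * \<delta>) + t * Bernstein n n p"
          by (simp add: algebra_simps)
        moreover have "Bernstein n 0 p * (\<bar>p - (a 0 - t)\<bar> - \<bar>p - a 0\<bar>) = - (t * Bernstein n 0 p)"
          using c0 by simp
        ultimately show ?thesis using pen[of p] pS cj cn cnt by linarith
      qed
    next
      case 2
      have c0: "Bernstein n 0 p * (\<bar>p - (a 0 - t)\<bar> - \<bar>p - a 0\<bar>) \<le> t * Bernstein n 0 p"
      proof -
        have "Bernstein n 0 p * (\<bar>p - (a 0 - t)\<bar> - \<bar>p - a 0\<bar>) \<le> Bernstein n 0 p * t"
          using abs_lip[of p "a 0 - t" "a 0"] tpos B0n by (intro mult_left_mono) auto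
        then show ?thesis by (simp add: mult.commute)
      qed
      have pge: "p \<ge> t * \<delta>" using 2 tdel tpos by linarith
      have cj: "\<bar>p - t * \<delta>\<bar> - \<bar>p\<bar> = - (t * \<delta>)" using pge p01 by simp
      show ?thesis
      proof (cases "p = 1")
        case True
        have "e"
        proof (rule ccontr)
          assume "\<not> e"
          then have "a n = 1" using an1 unfolding e_def by auto
          then show False using pS True penalty_1[of n a] S0 by simp
        qed
        then have epos: "0 < \<epsilon>" unfolding \<epsilon>_def by simp
        have "\<bar>1 - (a n + t * \<epsilon>)\<bar> - \<bar>1 - a n\<bar> = - (t * \<epsilon>)" using bn an1 by auto
        moreover have "0 < t * \<epsilon>" using tpos epos by simp
        ultimately show ?thesis using pen[of p] pS True j by (simp add: Bern_1)
      next
        case p1: False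
        have pp: "0 < p" "p < 1" using 2 tpos a0pos p01 p1 by auto
        have Bjpos: "0 < Bernstein n j p" using pp j by (intro Bernstein_pos) auto
        have lowj: "p ^ n * (1 - p) ^ n \<le> Bernstein n j p" using Bern_lower[OF j(1)] pp by auto
        have "a 0 ^ n \<le> p ^ n" using 2 tpos a00 by (intro power_mono) auto
        then have "a 0 ^ n * (1 - p) ^ n \<le> p ^ n * (1 - p) ^ n" using pp
          by (intro mult_right_mono) auto
        then have "a 0 ^ n * (1 - p) ^ n \<le> Bernstein n j p" using lowj by linarith
        then have "Bernstein n 0 p \<le> Bernstein n j p * d1"
          unfolding d1_def Bern_0n using a0pos by (simp add: field_simps)
        then have b0: "t * Bernstein n 0 p \<le> t * (Bernstein n j p * d1)" using tpos by simp
        have bn: "Bernstein n n p * (\<bar>p - (a n + t * \<epsilon>)\<bar> - \<bar>p - a n\<bar>) \<le> t * (Bernstein n j p * d2)"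
        proof (cases e)
          case False
          then have "\<epsilon> = 0" unfolding \<epsilon>_def by simp
          then show ?thesis using Bjpos tpos d2pos by simp
        next
          case True
          have "t \<le> \<bar>p - a n\<bar>" using gn te[OF True] pM by force
          then consider "p \<ge> a n + t" | "p \<le> a n - t" by linarith
          then show ?thesis
          proof cases
            case 1
            then have "p \<ge> a n + t * \<epsilon>" using teps by linarith
            moreover have "0 \<le> t * \<epsilon>" using tpos eps0 by simp
            ultimately have "\<bar>p - (a n + t * \<epsilon>)\<bar> - \<bar>p - a n\<bar> = - (t * \<epsilon>)"
              using abs_of_nonneg[of "p - a n"] abs_of_nonneg[of "p - (a n + t * \<epsilon>)"] by linarith
            moreover have "0 \<le> t * (Bernstein n j p * d2)" using tpos Bjpos d2pos by simp
            moreover have "0 \<le> Bernstein n n p * (t * \<epsilon>)" using B0n tpos eps0 by simp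
            ultimately show ?thesis by simp
          next
            case 2
            have c: "\<bar>p - (a n + t * \<epsilon>)\<bar> - \<bar>p - a n\<bar> \<le> t * \<epsilon>"
              using abs_lip[of p "a n + t * \<epsilon>" "a n"] tpos eps0 by simp
            have an1': "a n < 1" using True unfolding e_def by simp
            have "(1 - a n) ^ n \<le> (1 - p) ^ n" using 2 tpos an1 by (intro power_mono) auto
            then have "p ^ n * (1 - a n) ^ n \<le> p ^ n * (1 - p) ^ n" using pp by (intro mult_left_mono) auto
            then have "Bernstein n n p * (1 - a n) ^ n \<le> Bernstein n j p" using lowj by (simp add: Bern_nn)
            then have "Bernstein n n p \<le> Bernstein n j p / (1 - a n) ^ n"
              using an1' by (simp add: le_divide_eq)
            then have "\<epsilon> * Bernstein n n p \<le> \<epsilon> * (Bernstein n j p / (1 - a n) ^ n)"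
              using eps0 by (intro mult_left_mono) auto
            moreover have "Bernstein n j p * d2 = \<epsilon> * (Bernstein n j p / (1 - a n) ^ n)"
              unfolding d2_def by simp
            ultimately have "\<epsilon> * Bernstein n n p \<le> Bernstein n j p * d2" by linarith
            then have "t * (\<epsilon> * Bernstein n n p) \<le> t * (Bernstein n j p * d2)" using tpos by simp
            moreover have "Bernstein n n p * (\<bar>p - (a n + t * \<epsilon>)\<bar> - \<bar>p - a n\<bar>) \<le> Bernstein n n p * (t * \<epsilon>)"
              using c B0n by (intro mult_left_mono) auto
            moreover have "Bernstein n n p * (t * \<epsilon>) = t * (\<epsilon> * Bernstein n n p)" by simp
            ultimately show ?thesis by linarith
          qed
        qed
        have eqj: "Bernstein n j p * (\<bar>p - t * \<delta>\<bar> - \<bar>p\<bar>)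
           = - (t * (Bernstein n j p * d1)) - t * (Bernstein n j p * d2) - t * Bernstein n j p"
        proof -
          have "Bernstein n j p * (\<bar>p - t * \<delta>\<bar> - \<bar>p\<bar>) = - (t * (Bernstein n j p * \<delta>))" using cj by simp
          moreover have "t * (Bernstein n j p * \<delta>) = t * (Bernstein n j p * d1) + t * (Bernstein n j p * d2) + t * Bernstein n j p"
            unfolding \<delta>_def by (simp add: algebra_simps)
          ultimately show ?thesis by linarith
        qed
        have "0 < t * Bernstein n j p" using tpos Bjpos by simp
        then show ?thesis using pen[of p] pS c0 b0 bn eqj by linarith
      qed
    qed
  qed
qed

lemma left:
  assumes opt: "optimal n a" and n1: "1 \<le> n"
  shows "\<exists>p\<in>maxset n a. \<forall>k\<le>n. p < a k"
proof (rule ccontr)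
  assume H: "\<not> (\<exists>p\<in>maxset n a. \<forall>k\<le>n. p < a k)"
  have adm: "admissible n a" using opt_adm[OF opt] .
  define m where "m = Min (a ` {..n})"
  have "m \<in> a ` {..n}" unfolding m_def by (intro Min_in) auto
  then obtain j where j: "j \<le> n" "a j = m" by auto
  have minj: "\<forall>k\<le>n. a j \<le> a k" using j unfolding m_def by auto
  have above: "\<forall>p\<in>maxset n a. a j \<le> p"
  proof
    fix p assume pM: "p \<in> maxset n a"
    show "a j \<le> p"
    proof (rule ccontr)
      assume "\<not> a j \<le> p"
      then have "\<forall>k\<le>n. p < a k" using minj by force
      then show False using H pM by blast
    qed
  qed
  show False
  proof (cases "a j \<in> maxset n a")
    case False
    then show False using caseA[OF opt n1 j(1) minj False above] by simp
  next
    case True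
    have "a j \<le> a 0" using minj by simp
    then have ajh: "a j \<le> 1/2" using a0_le_half[OF opt] by simp
    have aj0: "0 \<le> a j" using adm j unfolding admissible_def by auto
    have "a j = 0"
    proof (rule ccontr)
      assume "a j \<noteq> 0"
      then show False using kink[of j n a] j aj0 ajh True by auto
    qed
    have zM: "0 \<in> maxset n a" using True \<open>a j = 0\<close> by simp
    have a0S: "a 0 = supnorm n a"
      using zM penalty_0[of n a] adm n1 unfolding maxset_def admissible_def by auto
    then have "j \<noteq> 0" using supnorm_pos[of n a] \<open>a j = 0\<close> by (metis less_irrefl)
    moreover have "j \<noteq> n" using an_ge_half[OF opt] \<open>a j = 0\<close> by auto
    ultimately show False using caseB[OF opt n1 j(1) _ _ \<open>a j = 0\<close> zM] by simp
  qed
qed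

definition rfl :: "nat \<Rightarrow> (nat \<Rightarrow> real) \<Rightarrow> nat \<Rightarrow> real" where
  "rfl n a = (\<lambda>k. 1 - a (n - k))"

lemma pen_rfl: "penalty n (rfl n a) p = penalty n a (1 - p)"
proof -
  have "penalty n (rfl n a) p = (\<Sum>k=0..n. real (n choose k) * p ^ k * (1 - p) ^ (n - k) * \<bar>p - (1 - a (n - k))\<bar>)"
    unfolding penalty_def rfl_def by (simp add: atMost_atLeast0)
  also have "\<dots> = (\<Sum>k=0..n. real (n choose (n - k)) * p ^ (n - k) * (1 - p) ^ (n - (n - k)) * \<bar>p - (1 - a (n - (n - k)))\<bar>)"
    by (subst sum.atLeastAtMost_rev) simp
  also have "\<dots> = (\<Sum>k=0..n. real (n choose k) * (1 - p) ^ k * (1 - (1 - p)) ^ (n - k) * \<bar>(1 - p) - a k\<bar>)"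
  proof (intro sum.cong refl)
    fix k assume "k \<in> {0..n}"
    then have k: "k \<le> n" by simp
    have "n - (n - k) = k" using k by simp
    moreover have "n choose (n - k) = n choose k" using binomial_symmetric[OF k] by simp
    moreover have "\<bar>p - (1 - a k)\<bar> = \<bar>(1 - p) - a k\<bar>" by linarith
    ultimately show "real (n choose (n - k)) * p ^ (n - k) * (1 - p) ^ (n - (n - k)) * \<bar>p - (1 - a (n - (n - k)))\<bar>
        = real (n choose k) * (1 - p) ^ k * (1 - (1 - p)) ^ (n - k) * \<bar>(1 - p) - a k\<bar>" by simp
  qed
  also have "\<dots> = penalty n a (1 - p)" unfolding penalty_def by (simp add: atMost_atLeast0)
  finally show ?thesis .
qed

lemma sup_rfl: "supnorm n (rfl n a) = supnorm n a"
proof (rule antisym)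
  obtain q where q: "q \<in> {0..1::real}" "supnorm n (rfl n a) = penalty n (rfl n a) q"
    using supnorm_attain by blast
  then show "supnorm n (rfl n a) \<le> supnorm n a" using le_supnorm[of "1 - q" n a] by (simp add: pen_rfl)
next
  obtain q where q: "q \<in> {0..1::real}" "supnorm n a = penalty n a q"
    using supnorm_attain by blast
  then show "supnorm n a \<le> supnorm n (rfl n a)" using le_supnorm[of "1 - q" n "rfl n a"] by (simp add: pen_rfl)
qed

lemma adm_rfl: "admissible n a \<Longrightarrow> admissible n (rfl n a)"
  unfolding admissible_def rfl_def by auto

lemma opt_rfl:
  assumes opt: "optimal n a" shows "optimal n (rfl n a)"
  unfolding optimal_def
proof (intro conjI allI impI)
  show "admissible n (rfl n a)" using adm_rfl opt_adm[OF opt] by blast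
  fix b assume b: "admissible n b"
  have "supnorm n a \<le> supnorm n (rfl n b)" using opt adm_rfl[OF b] unfolding optimal_def by blast
  then show "supnorm n (rfl n a) \<le> supnorm n b" by (simp add: sup_rfl)
qed

lemma right:
  assumes opt: "optimal n a" and n1: "1 \<le> n"
  shows "\<exists>q\<in>maxset n a. \<forall>k\<le>n. a k < q"
proof -
  obtain p where p: "p \<in> maxset n (rfl n a)" "\<forall>k\<le>n. p < rfl n a k"
    using left[OF opt_rfl[OF opt] n1] by blast
  have "1 - p \<in> maxset n a"
    using p(1) unfolding maxset_def by (auto simp: pen_rfl[symmetric] sup_rfl)
  moreover have "\<forall>k\<le>n. a k < 1 - p"
  proof (intro allI impI)
    fix k assume k: "k \<le> n"
    have "p < rfl n a (n - k)" using p(2) by simp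
    then show "a k < 1 - p" using k unfolding rfl_def by simp
  qed
  ultimately show ?thesis by blast
qed

theorem lemma2p1:
  fixes n :: nat and a :: "nat \<Rightarrow> real"
  assumes "n \<ge> 1" and "optimal n a"
  shows "maxset n a \<inter> a ` {..n} = {} \<and>
         maxset n a \<inter> {0..<Min (a ` {..n})} \<noteq> {} \<and>
         maxset n a \<inter> {Max (a ` {..n})<..1} \<noteq> {} \<and>
         (a 0 \<le> 1/2 \<and> 1/2 \<le> a n \<and> maxset n a \<inter> {a 0<..<a n} \<noteq> {})"
proof -
  note opt = assms(2) and n1 = assms(1)
  have adm: "admissible n a" using opt_adm[OF opt] .
  obtain p where p: "p \<in> maxset n a" "\<forall>k\<le>n. p < a k" using left[OF opt n1] by blast
  obtain q where q: "q \<in> maxset n a" "\<forall>k\<le>n. a k < q" using right[OF opt n1] by blast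
  have p0: "0 \<le> p" and q1: "q \<le> 1" using p(1) q(1) unfolding maxset_def by auto
  have i: "maxset n a \<inter> a ` {..n} = {}"
  proof (rule ccontr)
    assume "maxset n a \<inter> a ` {..n} \<noteq> {}"
    then obtain k where k: "k \<le> n" "a k \<in> maxset n a" by auto
    have "a k \<in> {0..1}" using adm k unfolding admissible_def by auto
    then consider "a k = 0" | "a k = 1" | "0 < a k \<and> a k < 1" by fastforce
    then show False
    proof cases
      case 1 then show False using p(2) k p0 by force
    next
      case 2 then show False using q(2) k q1 by force
    next
      case 3 then show False using kink[of k n a] k by auto
    qed
  qed
  have "p < Min (a ` {..n})" using p(2) by (subst Min_gr_iff) auto
  then have ii1: "maxset n a \<inter> {0..<Min (a ` {..n})} \<noteq> {}" using p(1) p0 by auto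
  have "Max (a ` {..n}) < q" using q(2) by (subst Max_less_iff) auto
  then have ii2: "maxset n a \<inter> {Max (a ` {..n})<..1} \<noteq> {}" using q(1) q1 by auto
  have iii: "maxset n a \<inter> {a 0<..<a n} \<noteq> {}" using partC[OF opt n1] by blast
  show ?thesis using i ii1 ii2 iii a0_le_half[OF opt] an_ge_half[OF opt] by blast
qed

end
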